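(* Let $\{z_n\}_{n\ge 0}$ be a sequence of positive numbers satisfying the recurrence $$z_{n+1}=a_nz_{n}+b_nz_{n-1}\qquad (n\ge 1),$$ where $\{a_n\}$ and $\{b_n\}$ are real sequences. Assume that for all $n\geq 1$ we have $b_{n+1}\geq b_n>0$, $a_{n+1}\geq a_n>0$ and $$21a_n^2+11 a_{n+1}a_n-4b_{n-1}\geq0.$$ For each $n$ let $$f_n(x)=\left[(a_{n+1}a_n+b_{n+1})x+a_{n+1}b_n\right](x-a_{n-1})x^6-b_{n-1}(a_nx+b_n)^4.$$ If there exist a positive integer $N$ and a sequence $\{\lambda_n\}$ such that for all $n\geq N+1$, $$\frac{z_{n}}{z_{n-1}}\geq \lambda_n\geq a_n,\quad f_n''(\lambda_n)>0,\quad f_n'(\lambda_n)>0,\quad f_n(\lambda_n)>0,$$ then the ratio sequence $\{z_{n+1}/z_n\}_{n\ge N}$ is ratio log-convex.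
   Context: A sequence $\{x_n\}$ of positive numbers is log-convex if $x_{n-1}x_{n+1}\ge x_n^2$ for all indices $n$ for which the three terms are defined (i.e. all but the first index), and log-concave if $x_{n-1}x_{n+1}\le x_n^2$ for all such $n$. A sequence $\{x_n\}$ of positive numbers is called ratio log-convex (resp. ratio log-concave) if the sequence $\{x_{n+1}/x_n\}$ is log-convex (resp. log-concave). *)

theory Defs
  imports "HOL-Analysis.Analysis"
begin

definition log_convex :: "(nat \<Rightarrow> real) \<Rightarrow> bool" where
  "log_convex x \<longleftrightarrow> (\<forall>n. x n > 0) \<and> (\<forall>n\<ge>1. x (n - 1) * x (n + 1) \<ge> (x n)\<^sup>2)"

definition log_concave :: "(nat \<Rightarrow> real) \<Rightarrow> bool" where
  "log_concave x \<longleftrightarrow> (\<forall>n. x n > 0) \<and> (\<forall>n\<ge>1. x (n - 1) * x (n + 1) \<le> (x n)\<^sup>2)"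

definition ratio_log_convex :: "(nat \<Rightarrow> real) \<Rightarrow> bool" where
  "ratio_log_convex x \<longleftrightarrow> (\<forall>n. x n > 0) \<and> log_convex (\<lambda>n. x (n + 1) / x n)"

definition ratio_log_concave :: "(nat \<Rightarrow> real) \<Rightarrow> bool" where
  "ratio_log_concave x \<longleftrightarrow> (\<forall>n. x n > 0) \<and> log_concave (\<lambda>n. x (n + 1) / x n)"

definition fpoly :: "(nat \<Rightarrow> real) \<Rightarrow> (nat \<Rightarrow> real) \<Rightarrow> nat \<Rightarrow> real \<Rightarrow> real" where
  "fpoly a b n x =
     ((a (n + 1) * a n + b (n + 1)) * x + a (n + 1) * b n) * (x - a (n - 1)) * x ^ 6
     - b (n - 1) * (a n * x + b n) ^ 4"

end

theory Submission imports Defs begin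

definition F0 :: "real\<Rightarrow>real\<Rightarrow>real\<Rightarrow>real\<Rightarrow>real\<Rightarrow>real\<Rightarrow>real\<Rightarrow>real" where
 "F0 A B c d p q x = (A*x+B)*(x-c)*x^6 - d*(p*x+q)^4"
definition F1 :: "real\<Rightarrow>real\<Rightarrow>real\<Rightarrow>real\<Rightarrow>real\<Rightarrow>real\<Rightarrow>real\<Rightarrow>real" where
 "F1 A B c d p q x = 8*A*x^7 + 7*(B-A*c)*x^6 - 6*B*c*x^5 - 4*d*p*(p*x+q)^3"
definition F2 :: "real\<Rightarrow>real\<Rightarrow>real\<Rightarrow>real\<Rightarrow>real\<Rightarrow>real\<Rightarrow>real\<Rightarrow>real" where
 "F2 A B c d p q x = 56*A*x^6 + 42*(B-A*c)*x^5 - 30*B*c*x^4 - 12*d*p^2*(p*x+q)^2"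
definition F3 :: "real\<Rightarrow>real\<Rightarrow>real\<Rightarrow>real\<Rightarrow>real\<Rightarrow>real\<Rightarrow>real\<Rightarrow>real" where
 "F3 A B c d p q x = 336*A*x^5 + 210*(B-A*c)*x^4 - 120*B*c*x^3 - 24*d*p^3*(p*x+q)"

lemma D0: "(F0 A B c d p q has_real_derivative F1 A B c d p q x) (at x)"
proof -
  have "((\<lambda>x. A*x^8 + (B-A*c)*x^7 - B*c*x^6 - d*(p*x+q)^4) has_real_derivative
     A*(8*x^7) + (B-A*c)*(7*x^6) - B*c*(6*x^5) - d*(4*(p*x+q)^3*p)) (at x)"
    by (auto intro!: derivative_eq_intros simp: eval_nat_numeral)
  moreover have "F0 A B c d p q = (\<lambda>x. A*x^8 + (B-A*c)*x^7 - B*c*x^6 - d*(p*x+q)^4)"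
    by (rule ext) (simp add: F0_def algebra_simps eval_nat_numeral)
  moreover have "A*(8*x^7) + (B-A*c)*(7*x^6) - B*c*(6*x^5) - d*(4*(p*x+q)^3*p) = F1 A B c d p q x"
    by (simp add: F1_def algebra_simps)
  ultimately show ?thesis by simp
qed

lemma D1: "(F1 A B c d p q has_real_derivative F2 A B c d p q x) (at x)"
proof -
  have "((\<lambda>x. 8*A*x^7 + 7*(B-A*c)*x^6 - 6*B*c*x^5 - 4*d*p*(p*x+q)^3) has_real_derivative
     8*A*(7*x^6) + 7*(B-A*c)*(6*x^5) - 6*B*c*(5*x^4) - 4*d*p*(3*(p*x+q)^2*p)) (at x)"
    by (auto intro!: derivative_eq_intros simp: eval_nat_numeral)
  moreover have "8*A*(7*x^6) + 7*(B-A*c)*(6*x^5) - 6*B*c*(5*x^4) - 4*d*p*(3*(p*x+q)^2*p) = F2 A B c d p q x"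
    by (simp add: F2_def algebra_simps power2_eq_square)
  ultimately show ?thesis unfolding F1_def[abs_def] by simp
qed

lemma D2: "(F2 A B c d p q has_real_derivative F3 A B c d p q x) (at x)"
proof -
  have "((\<lambda>x. 56*A*x^6 + 42*(B-A*c)*x^5 - 30*B*c*x^4 - 12*d*p^2*(p*x+q)^2) has_real_derivative
     56*A*(6*x^5) + 42*(B-A*c)*(5*x^4) - 30*B*c*(4*x^3) - 12*d*p^2*(2*(p*x+q)*p)) (at x)"
    by (auto intro!: derivative_eq_intros simp: eval_nat_numeral)
  moreover have "56*A*(6*x^5) + 42*(B-A*c)*(5*x^4) - 30*B*c*(4*x^3) - 12*d*p^2*(2*(p*x+q)*p) = F3 A B c d p q x"
    by (simp add: F3_def algebra_simps power2_eq_square power3_eq_cube)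
  ultimately show ?thesis unfolding F2_def[abs_def] by simp
qed

lemma deriv1: "deriv (F0 A B c d p q) = F1 A B c d p q"
  using D0 DERIV_imp_deriv by blast
lemma deriv2: "deriv (F1 A B c d p q) = F2 A B c d p q"
  using D1 DERIV_imp_deriv by blast

lemma F3pos:
  fixes a' p c q q' d x :: real
  assumes "0 < c" "c \<le> p" "p \<le> a'" "p \<le> x" "0 < d" "d \<le> q" "q \<le> q'"
    "4*d \<le> 21*p^2 + 11*a'*p"
  shows "F3 (a'*p+q') (a'*q) c d p q x > 0"
proof -
  have x0: "x > 0" using assms by linarith
  have e1: "336*(a'*p+q')*x^5 - 210*(a'*p+q')*c*x^4 \<ge> 126*(a'*p+q)*x^5"
  proof -
    have "(a'*p+q')*c*x^4 \<le> (a'*p+q')*x*x^4"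
      using assms x0 by (intro mult_right_mono mult_left_mono) (auto intro!: add_nonneg_nonneg mult_nonneg_nonneg)
    moreover have "(a'*p+q)*x^5 \<le> (a'*p+q')*x^5" using assms x0 by (intro mult_right_mono) auto
    ultimately show ?thesis by (simp add: power_numeral_reduce algebra_simps eval_nat_numeral)
  qed
  have px: "p^4 \<le> x^4" "p^5 \<le> x^5" "p^3 \<le> x^3" using assms by (auto intro!: power_mono)
  have e2: "120*(a'*q)*c*x^3 \<le> 120*(a'*q)*x^4"
  proof -
    have "c*x^3 \<le> x*x^3" using assms x0 by (intro mult_right_mono) auto
    thus ?thesis using assms by (simp add: eval_nat_numeral algebra_simps)
  qed
  have e3: "d*p^3*(p*x) \<le> (a'*q)*x^4"
  proof -
    have "d*p^3*(p*x) = d*(p^4*x)" by (simp add: eval_nat_numeral algebra_simps)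
    also have "\<dots> \<le> q*(a'*x^3*x)"
    proof (rule mult_mono)
      show "p^4*x \<le> a'*x^3*x"
      proof (rule mult_right_mono)
        have "p^4 = p*p^3" by (simp add: eval_nat_numeral)
        also have "\<dots> \<le> a'*x^3" using assms px by (intro mult_mono) auto
        finally show "p^4 \<le> a'*x^3" .
      qed (use x0 in auto)
    qed (use assms x0 in auto)
    finally show ?thesis by (simp add: eval_nat_numeral algebra_simps)
  qed
  have e4: "24*d*p^3*q \<le> 126*q*x^5 + 66*(a'*q)*x^4"
  proof -
    have "24*d*p^3*q = (4*d)*(6*p^3*q)" by simp
    also have "\<dots> \<le> (21*p^2 + 11*a'*p)*(6*p^3*q)" using assms by (intro mult_right_mono) auto
    also have "\<dots> = 126*q*p^5 + 66*(a'*q)*p^4" by (simp add: eval_nat_numeral algebra_simps)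
    also have "\<dots> \<le> 126*q*x^5 + 66*(a'*q)*x^4"
      using px assms by (intro add_mono mult_left_mono) auto
    finally show ?thesis .
  qed
  have e5: "0 < 126*(a'*p)*x^5" using assms x0 by auto
  have "F3 (a'*p+q') (a'*q) c d p q x = (336*(a'*p+q')*x^5 - 210*(a'*p+q')*c*x^4)
     + 210*(a'*q)*x^4 - 120*(a'*q)*c*x^3 - 24*(d*p^3*(p*x)) - 24*d*p^3*q"
    by (simp add: F3_def algebra_simps)
  also have "\<dots> \<ge> 126*(a'*p+q)*x^5 + 210*(a'*q)*x^4 - 120*(a'*q)*x^4 - 24*((a'*q)*x^4) - (126*q*x^5 + 66*(a'*q)*x^4)"
    using e1 e2 e3 e4 by linarith
  finally show ?thesis using e5 by (simp add: algebra_simps)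
qed
lemma Fpos:
  fixes a' p c q q' d x l :: real
  assumes "0 < c" "c \<le> p" "p \<le> a'" "p \<le> l" "l \<le> x" "0 < d" "d \<le> q" "q \<le> q'"
    "4*d \<le> 21*p^2 + 11*a'*p"
    "F2 (a'*p+q') (a'*q) c d p q l > 0" "F1 (a'*p+q') (a'*q) c d p q l > 0"
    "F0 (a'*p+q') (a'*q) c d p q l > 0"
  shows "F0 (a'*p+q') (a'*q) c d p q x > 0"
proof (cases "l = x")
  case True thus ?thesis using assms by simp
next
  case False
  hence lx: "l < x" using assms by simp
  let ?A = "a'*p+q'" and ?B = "a'*q"
  have f2: "F2 ?A ?B c d p q y > 0" if "l \<le> y" "y \<le> x" for y
  proof (cases "l = y")
    case True thus ?thesis using assms by simp
  next
    case False
    have "F2 ?A ?B c d p q l < F2 ?A ?B c d p q y"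
    proof (rule DERIV_pos_imp_increasing[of l y])
      show "l < y" using that False by simp
    next
      fix t assume "l \<le> t" "t \<le> y"
      hence "p \<le> t" using assms by linarith
      hence "F3 ?A ?B c d p q t > 0" using assms by (intro F3pos) auto
      thus "\<exists>y. DERIV (F2 ?A ?B c d p q) t :> y \<and> y > 0" using D2 by blast
    qed
    thus ?thesis using assms by simp
  qed
  have f1: "F1 ?A ?B c d p q y > 0" if "l \<le> y" "y \<le> x" for y
  proof (cases "l = y")
    case True thus ?thesis using assms by simp
  next
    case False
    have "F1 ?A ?B c d p q l < F1 ?A ?B c d p q y"
    proof (rule DERIV_pos_imp_increasing[of l y])
      show "l < y" using that False by simp
    next
      fix t assume "l \<le> t" "t \<le> y"
      hence "F2 ?A ?B c d p q t > 0" using that by (intro f2) auto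
      thus "\<exists>y. DERIV (F1 ?A ?B c d p q) t :> y \<and> y > 0" using D1 by blast
    qed
    thus ?thesis using assms by simp
  qed
  have "F0 ?A ?B c d p q l < F0 ?A ?B c d p q x"
  proof (rule DERIV_pos_imp_increasing[of l x])
    show "l < x" using lx .
  next
    fix t assume "l \<le> t" "t \<le> x"
    hence "F1 ?A ?B c d p q t > 0" by (intro f1) auto
    thus "\<exists>y. DERIV (F0 ?A ?B c d p q) t :> y \<and> y > 0" using D0 by blast
  qed
  thus ?thesis using assms by simp
qed

lemma F0_scale:
  fixes A B c d p q w v :: real
  assumes "v > 0"
  shows "F0 A B c d p q (w/v) * v^8 = (A*w+B* v)*(w-c* v)*w^6 - d*(p*w+q* v)^4* v^4"
  using assms by (simp add: F0_def field_simps eval_nat_numeral)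

lemma fpoly_F0: "fpoly a b n = F0 (a (n+1)*a n + b (n+1)) (a (n+1)*b n) (a (n-1)) (b (n-1)) (a n) (b n)"
  by (rule ext) (simp add: fpoly_def F0_def)

lemma final:
  fixes U V W S T :: real
  assumes "U > 0" "V > 0" "W > 0" "S > 0" "T > 0" "S^4*V^4 < U*T*W^6"
  shows "(S/W/(W/V))^2 \<le> (W/V/(V/U)) * (T/S/(S/W))"
proof -
  have "(S/W/(W/V))^2 = (S^4*V^4) / (W^4*S^2*V^2)" using assms by (simp add: field_simps eval_nat_numeral)
  also have "\<dots> \<le> (U*T*W^6) / (W^4*S^2*V^2)" using assms by (intro divide_right_mono) auto
  also have "\<dots> = (W/V/(V/U)) * (T/S/(S/W))" using assms by (simp add: field_simps eval_nat_numeral)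
  finally show ?thesis .
qed

theorem theorem2p1:
  fixes z a b lam :: "nat \<Rightarrow> real" and N :: nat
  assumes zpos: "\<And>n. z n > 0"
    and rec: "\<And>n. n \<ge> 1 \<Longrightarrow> z (n + 1) = a n * z n + b n * z (n - 1)"
    and bpos: "\<And>n. n \<ge> 1 \<Longrightarrow> b (n + 1) \<ge> b n \<and> b n > 0"
    and apos: "\<And>n. n \<ge> 1 \<Longrightarrow> a (n + 1) \<ge> a n \<and> a n > 0"
    and cond: "\<And>n. n \<ge> 1 \<Longrightarrow> 21 * (a n)\<^sup>2 + 11 * a (n + 1) * a n - 4 * b (n - 1) \<ge> 0"
    and N: "N \<ge> 1"
    and lam: "\<And>n. n \<ge> N + 1 \<Longrightarrow>
               z n / z (n - 1) \<ge> lam n \<and> lam n \<ge> a n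
             \<and> deriv (deriv (fpoly a b n)) (lam n) > 0
             \<and> deriv (fpoly a b n) (lam n) > 0
             \<and> fpoly a b n (lam n) > 0"
  shows "ratio_log_convex (\<lambda>k. z (N + k + 1) / z (N + k))"
proof -
  have key: "z (m-2) * z (m+2) * z m ^ 6 > z (m+1) ^ 4 * z (m-1) ^ 4" if m: "m \<ge> N + 2" for m
  proof -
    define u where "u = z (m-2)"
    define v where "v = z (m-1)"
    define w where "w = z m"
    define s where "s = z (m+1)"
    define t where "t = z (m+2)"
    define a' where "a' = a (m+1)"
    define p where "p = a m"
    define c where "c = a (m-1)"
    define q where "q = b m"
    define q' where "q' = b (m+1)"
    define d where "d = b (m-1)"
    have m1: "m - 1 \<ge> 1" "m \<ge> 1" "m - 1 + 1 = m" "m - 1 - 1 = m - 2" "m + 1 - 1 = m" "m+1+1 = m+2"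
      using m N by auto
    have r1: "w = c * v + d*u" using rec[of "m-1"] m1 unfolding u_def v_def w_def c_def d_def by simp
    have r2: "s = p*w + q * v" using rec[of m] m1 unfolding s_def v_def w_def p_def q_def by simp
    have r3: "t = a' * s + q' * w" using rec[of "m+1"] m1 unfolding s_def t_def w_def a'_def q'_def by simp
    have pos: "u > 0" "v > 0" "w > 0" "s > 0" "t > 0" unfolding u_def v_def w_def s_def t_def using zpos by auto
    have h1: "c > 0" "c \<le> p" using apos[of "m-1"] m1 unfolding c_def p_def by auto
    have h2: "p \<le> a'" using apos[of m] m1 unfolding a'_def p_def by auto
    have h3: "d > 0" "d \<le> q" using bpos[of "m-1"] m1 unfolding d_def q_def by auto
    have h4: "q \<le> q'" using bpos[of m] m1 unfolding q'_def q_def by auto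
    have h5: "4*d \<le> 21*p^2 + 11*a'*p" using cond[of m] m1 unfolding d_def p_def a'_def by auto
    have L: "w/v \<ge> lam m" "lam m \<ge> p"
      "F2 (a'*p+q') (a'*q) c d p q (lam m) > 0" "F1 (a'*p+q') (a'*q) c d p q (lam m) > 0"
      "F0 (a'*p+q') (a'*q) c d p q (lam m) > 0"
      using lam[of m] m unfolding fpoly_F0 deriv1 deriv2 w_def v_def a'_def p_def c_def q_def q'_def d_def
      by auto
    have "F0 (a'*p+q') (a'*q) c d p q (w/v) > 0"
      using Fpos[OF h1 h2 L(2) L(1) h3 h4 h5 L(3) L(4) L(5)] .
    hence "F0 (a'*p+q') (a'*q) c d p q (w/v) * v^8 > 0" using pos by simp
    also have "F0 (a'*p+q') (a'*q) c d p q (w/v) * v^8 = d * (u*t*w^6 - s^4* v^4)"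
      unfolding F0_scale[OF pos(2)] r3 r2 using r1 by (simp add: algebra_simps)
    finally have "u*t*w^6 - s^4* v^4 > 0" using h3 by (simp add: zero_less_mult_iff)
    thus ?thesis unfolding u_def v_def w_def s_def t_def by simp
  qed
  show ?thesis
    unfolding ratio_log_convex_def log_convex_def
  proof (intro conjI allI impI)
    fix k :: nat
    show "z (N + k + 1) / z (N + k) > 0" using zpos by simp
    show "z (N + (k + 1) + 1) / z (N + (k + 1)) / (z (N + k + 1) / z (N + k)) > 0" using zpos by simp
  next
    fix k :: nat assume "1 \<le> k"
    then obtain j where kj: "k = Suc j" by (cases k) auto
    define m where "m = N + j + 2"
    have "z (m-2) * z (m+2) * z m ^ 6 > z (m+1) ^ 4 * z (m-1) ^ 4" by (rule key) (simp add: m_def)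
    hence K: "z (N+j) * z (N+j+4) * z (N+j+2) ^ 6 > z (N+j+3) ^ 4 * z (N+j+1) ^ 4"
      by (simp add: m_def numeral_eq_Suc)
    show "(z (N + (k - 1 + 1) + 1) / z (N + (k - 1 + 1)) / (z (N + (k - 1) + 1) / z (N + (k - 1)))) *
         (z (N + (k + 1 + 1) + 1) / z (N + (k + 1 + 1)) / (z (N + (k + 1) + 1) / z (N + (k + 1)))) \<ge>
         (z (N + (k + 1) + 1) / z (N + (k + 1)) / (z (N + k + 1) / z (N + k)))\<^sup>2"
      using final[OF zpos zpos zpos zpos zpos K] by (simp add: kj eval_nat_numeral)
  qed
qed

end
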